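(* Let $S\ge 2$ and $\alpha_1,\dots,\alpha_S>0$. As $n\to\infty$ through values with $m_j=\alpha_j n$ positive integers for all $j$, and with $M=m_1+\dots+m_S$, $$B(m_1,\dots,m_S)\sim\frac{m_1\cdots m_S}{(M-m_1)\cdots(M-m_S)}\cdot\frac{M!}{m_1!\cdots m_S!}.$$
   Context: For positive integers $m_1,\dots,m_S$, $B(m_1,\dots,m_S)=\sum_{\ell_1=0}^{m_1-1}\cdots\sum_{\ell_S=0}^{m_S-1}\frac{(\ell_1+\dots+\ell_S)!}{\ell_1!\cdots\ell_S!}$; equivalently $B(m_1,\dots,m_S)=\sum_{k_1=1}^{m_1}\cdots\sum_{k_S=1}^{m_S}\binom{m_1}{k_1}\cdots\binom{m_S}{k_S}E(k_1-1,\dots,k_S-1)$ where $E$ is the block derangement number. *)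

theory Defs
  imports Complex_Main "HOL-Library.FuncSet"
begin

definition blockB :: "nat \<Rightarrow> (nat \<Rightarrow> nat) \<Rightarrow> real" where
  "blockB S m = (\<Sum>l \<in> PiE {..<S} (\<lambda>j. {..<m j}).
      fact (\<Sum>j<S. l j) / (\<Prod>j<S. fact (l j)))"

end

theory Submission
  imports Defs
begin

definition ffr :: "real \<Rightarrow> nat \<Rightarrow> real" where
  "ffr x k = (\<Prod>i<k. x - real i)"

lemma ffr_0[simp]: "ffr x 0 = 1" by (simp add: ffr_def)

lemma ffr_add: "ffr x (a + b) = ffr x a * ffr (x - real a) b"
  by (induction b) (auto simp: ffr_def algebra_simps)

lemma ffr_sum: "ffr x (\<Sum>j<(n::nat). d j) = (\<Prod>j<n. ffr (x - real (\<Sum>k<j. d k)) (d j))"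
  by (induction n) (auto simp: ffr_add)

lemma fact_ffr: "k \<le> n \<Longrightarrow> fact n = ffr (real n) k * fact (n - k)"
proof (induction k)
  case 0 then show ?case by simp
next
  case (Suc k)
  have "fact (n - k) = real (n - k) * (fact (n - Suc k) :: real)"
    using Suc.prems by (metis Suc_diff_Suc Suc_le_lessD fact_Suc diff_Suc_Suc diff_zero of_nat_fact mult.commute of_nat_mult)
  then have e: "fact (n - k) = (real n - real k) * (fact (n - Suc k) :: real)"
    using Suc.prems by (simp add: of_nat_diff)
  have "ffr (real n) (Suc k) * fact (n - Suc k) = ffr (real n) k * ((real n - real k) * fact (n - Suc k))"
    by (simp add: ffr_def)
  also have "\<dots> = fact n" using e Suc by simp
  finally show ?case by simp
qed

lemma ffr_pos: "real k \<le> x \<Longrightarrow> ffr x k > 0"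
  unfolding ffr_def by (intro prod_pos) auto

definition Rt :: "nat \<Rightarrow> (nat \<Rightarrow> nat) \<Rightarrow> (nat \<Rightarrow> nat) \<Rightarrow> real" where
  "Rt S m d = (\<Prod>j<S. ffr (real (m j)) (d j)) / ffr (real (\<Sum>j<S. m j)) (\<Sum>j<S. d j)"

definition box :: "nat \<Rightarrow> (nat \<Rightarrow> nat) \<Rightarrow> (nat \<Rightarrow> nat) set" where
  "box S m = PiE {..<S} (\<lambda>j. {1..m j})"

lemma box_le: "d \<in> box S m \<Longrightarrow> j < S \<Longrightarrow> d j \<le> m j \<and> 1 \<le> d j"
  unfolding box_def by (auto simp: PiE_iff)

lemma box_sum_le: "d \<in> box S m \<Longrightarrow> (\<Sum>j<S. d j) \<le> (\<Sum>j<S. m j)"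
  by (intro sum_mono) (auto dest: box_le)

lemma Rt_nonneg: "d \<in> box S m \<Longrightarrow> Rt S m d \<ge> 0"
  unfolding Rt_def using box_sum_le[of d S m] box_le[of d S m]
  apply (intro divide_nonneg_pos prod_nonneg ffr_pos[THEN less_imp_le] ffr_pos)
   apply auto
  by (metis of_nat_le_iff of_nat_sum)

lemma term_eq:
  assumes "d \<in> box S m"
  shows "fact (\<Sum>j<S. (m j - d j)) / (\<Prod>j<S. fact (m j - d j)) =
         fact (\<Sum>j<S. m j) / (\<Prod>j<S. fact (m j)) * Rt S m d"
proof -
  define M where "M = (\<Sum>j<S. m j)"
  define D where "D = (\<Sum>j<S. d j)"
  have le: "\<And>j. j < S \<Longrightarrow> d j \<le> m j" using box_le[OF assms] by blast
  have DM: "D \<le> M" unfolding D_def M_def using box_sum_le[OF assms] .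
  have s: "(\<Sum>j<S. (m j - d j)) = M - D"
    unfolding M_def D_def using le by (intro sum_subtractf_nat) auto
  have fM: "fact M = ffr (real M) D * fact (M - D)" using fact_ffr[OF DM] .
  have fm: "\<And>j. j < S \<Longrightarrow> (fact (m j) :: real) = ffr (real (m j)) (d j) * fact (m j - d j)"
    using fact_ffr le by blast
  have pm: "(\<Prod>j<S. (fact (m j) :: real)) = (\<Prod>j<S. ffr (real (m j)) (d j)) * (\<Prod>j<S. fact (m j - d j))"
    by (simp add: fm prod.distrib)
  have pos1: "ffr (real M) D > 0" using DM by (intro ffr_pos) auto
  have pos2: "(\<Prod>j<S. ffr (real (m j)) (d j)) > 0" using le by (intro prod_pos ffr_pos) auto
  have pos4: "\<forall>j\<in>{..<S}. ffr (real (m j)) (d j) \<noteq> 0" using le ffr_pos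
    by (metis lessThan_iff less_irrefl of_nat_le_iff)
  have pos3: "(\<Prod>j<S. (fact (m j - d j) :: real)) > 0" by (intro prod_pos) auto
  show ?thesis unfolding s Rt_def M_def[symmetric] D_def[symmetric] pm fM
    using pos1 pos2 pos3 pos4 by (simp add: field_simps)
qed

lemma blockB_eq:
  "blockB S m = fact (\<Sum>j<S. m j) / (\<Prod>j<S. fact (m j)) * (\<Sum>d\<in>box S m. Rt S m d)"
proof -
  have "blockB S m = (\<Sum>d\<in>box S m. fact (\<Sum>j<S. (m j - d j)) / (\<Prod>j<S. fact (m j - d j)))"
    unfolding blockB_def box_def
    apply (rule sum.reindex_bij_witness[where i="\<lambda>l. restrict (\<lambda>j. m j - l j) {..<S}" and j="\<lambda>l. restrict (\<lambda>j. m j - l j) {..<S}"])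
    apply (auto simp: PiE_iff fun_eq_iff extensional_def Ball_def)
    apply (auto intro!: sum.cong prod.cong arg_cong[where f=fact] arg_cong2[where f="(/)"])
    done
  also have "\<dots> = (\<Sum>d\<in>box S m. fact (\<Sum>j<S. m j) / (\<Prod>j<S. fact (m j)) * Rt S m d)"
    by (intro sum.cong refl term_eq)
  finally show ?thesis by (simp add: sum_distrib_left)
qed

lemma prod_le_const_pow:
  fixes f :: "nat \<Rightarrow> real"
  assumes "\<And>i. i < k \<Longrightarrow> 0 \<le> f i \<and> f i \<le> c"
  shows "(\<Prod>i<k. f i) \<le> c ^ k"
proof -
  have "(\<Prod>i<k. f i) \<le> (\<Prod>i<k. c)" using assms by (intro prod_mono) auto
  then show ?thesis by simp
qed

lemma ffr_le_pow: "real k \<le> x + 1 \<Longrightarrow> 0 \<le> x \<Longrightarrow> ffr x k \<le> x ^ k"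
  unfolding ffr_def by (rule prod_le_const_pow) auto

lemma ffr_ge_pow: "0 \<le> y \<Longrightarrow> y + real k \<le> x + 1 \<Longrightarrow> y ^ k \<le> ffr x k"
proof -
  assume a: "0 \<le> y" "y + real k \<le> x + 1"
  have "(\<Prod>i<k. y) \<le> (\<Prod>i<k. x - real i)" using a by (intro prod_mono) auto
  then show ?thesis by (simp add: ffr_def)
qed

lemma frac_aux:
  fixes a i T N :: real
  assumes "0 \<le> i" "i < a" "a \<le> T" "T \<le> N"
  shows "(a - i) / (N - i) \<le> a / T"
proof -
  have "(a - i) / (N - i) \<le> (a - i) / (T - i)"
    using assms by (intro divide_left_mono) auto
  also have "\<dots> \<le> a / T"
  proof -
    have "0 \<le> i * (T - a)" using assms by simp
    then have "(a - i) * T \<le> a * (T - i)" by (simp add: algebra_simps)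
    then show ?thesis using assms by (simp add: divide_simps)
  qed
  finally show ?thesis .
qed

lemma ffr_ratio:
  assumes "real k \<le> a" "a \<le> T" "T \<le> N" "0 < T"
  shows "ffr a k / ffr N k \<le> (a / T) ^ k"
proof -
  have "ffr a k / ffr N k = (\<Prod>i<k. (a - real i) / (N - real i))"
    unfolding ffr_def by (simp add: prod_dividef)
  also have "\<dots> \<le> (a / T) ^ k"
    using assms by (intro prod_le_const_pow) (auto intro!: frac_aux divide_nonneg_nonneg)
  finally show ?thesis .
qed

lemma sum_split_at: "j \<le> (S::nat) \<Longrightarrow> (\<Sum>k<S. f k) = (\<Sum>k<j. f k) + (\<Sum>k\<in>{j..<S}. (f k :: nat))"
  using sum.atLeastLessThan_concat[of 0 j S f] by (simp add: atLeast0LessThan)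

lemma Rt_U1:
  assumes le: "\<forall>j<S. d j \<le> m j" and DM: "(\<Sum>j<S. d j) < (\<Sum>j<S. m j)"
  shows "Rt S m d \<le> (\<Prod>j<S. (real (m j) / (real (\<Sum>j<S. m j) - real (\<Sum>j<S. d j))) ^ d j)"
proof -
  define M where "M = (\<Sum>j<S. m j)"
  define D where "D = (\<Sum>j<S. d j)"
  have DM': "D < M" using DM unfolding M_def D_def .
  have y: "(\<Prod>j<S. ffr (real (m j)) (d j)) \<le> (\<Prod>j<S. real (m j) ^ d j)"
    using le by (intro prod_mono conjI ffr_le_pow ffr_pos[THEN less_imp_le]) auto
  have w: "(real M - real D) ^ D \<le> ffr (real M) D"
    using DM' by (intro ffr_ge_pow) auto
  have wpos: "0 < (real M - real D) ^ D" using DM' by simp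
  have "Rt S m d \<le> (\<Prod>j<S. real (m j) ^ d j) / (real M - real D) ^ D"
    unfolding Rt_def M_def[symmetric] D_def[symmetric]
    by (rule frac_le[OF _ y wpos w]) (auto intro: prod_nonneg)
  also have "\<dots> = (\<Prod>j<S. (real (m j) / (real M - real D)) ^ d j)"
    unfolding D_def power_sum by (simp add: power_divide prod_dividef)
  finally show ?thesis unfolding M_def D_def .
qed

lemma Rt_U2:
  assumes S: "S = Suc S'" and le: "\<forall>j<S. d j \<le> m j" and mpos: "\<forall>j<S. 0 < m j"
    and c: "0 \<le> c" and H: "\<forall>j<S'. real (m j) \<le> c * real (\<Sum>k\<in>{j..<S}. m k)"
  shows "Rt S m d \<le> c ^ (\<Sum>j<S'. d j)"
proof -
  define M where "M = (\<Sum>j<S. m j)"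
  define F where "F j = ffr (real (m j)) (d j) / ffr (real M - real (\<Sum>k<j. d k)) (d j)" for j
  define T where "T j = real (\<Sum>k\<in>{j..<S}. m k)" for j
  have Rt: "Rt S m d = (\<Prod>j<S. F j)"
    unfolding Rt_def F_def M_def ffr_sum by (simp add: prod_dividef)
  have Tpos: "0 < T j" if "j < S" for j
  proof -
    have "m j \<le> (\<Sum>k\<in>{j..<S}. m k)" using that by (intro member_le_sum) auto
    then show ?thesis using mpos that unfolding T_def by (metis gr0I le_zero_eq of_nat_0_less_iff)
  qed
  have mT': "real (m j) \<le> T j" if "j < S" for j
  proof -
    have "m j \<le> (\<Sum>k\<in>{j..<S}. m k)" using that by (intro member_le_sum) auto
    then show ?thesis unfolding T_def by (simp only: of_nat_le_iff)
  qed
  have Fb: "F j \<le> (real (m j) / T j) ^ d j" "0 \<le> F j" if j: "j < S" for j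
  proof -
    have sp: "M = (\<Sum>k<j. m k) + (\<Sum>k\<in>{j..<S}. m k)" unfolding M_def using j by (intro sum_split_at) auto
    have dm: "(\<Sum>k<j. d k) \<le> (\<Sum>k<j. m k)" using le j by (intro sum_mono) auto
    have mT: "m j \<le> (\<Sum>k\<in>{j..<S}. m k)" using j by (intro member_le_sum) auto
    have TN: "T j \<le> real M - real (\<Sum>k<j. d k)" unfolding T_def
    proof -
      have "real (\<Sum>k<j. d k) \<le> real (\<Sum>k<j. m k)" using dm by (simp only: of_nat_le_iff)
      moreover have "real M = real (\<Sum>k<j. m k) + real (\<Sum>k\<in>{j..<S}. m k)" using sp by (simp only: of_nat_add)
      ultimately show "real (\<Sum>k\<in>{j..<S}. m k) \<le> real M - real (\<Sum>k<j. d k)" by linarith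
    qed
    have "F j \<le> (real (m j) / T j) ^ d j" unfolding F_def
      using le[rule_format, OF j] mT'[OF j] TN Tpos[OF j] by (intro ffr_ratio) auto
    moreover have "0 \<le> F j" unfolding F_def using le[rule_format, OF j] mT'[OF j] TN
      by (intro divide_nonneg_nonneg ffr_pos[THEN less_imp_le]) auto
    ultimately show "F j \<le> (real (m j) / T j) ^ d j" "0 \<le> F j" by auto
  qed
  have F1: "F j \<le> c ^ d j" if "j < S'" for j
  proof -
    have "real (m j) / T j \<le> c" using H that Tpos[of j] S by (auto simp: T_def divide_le_eq mult.commute)
    then have "(real (m j) / T j) ^ d j \<le> c ^ d j" using Tpos[of j] that S by (intro power_mono) auto
    then show ?thesis using Fb[of j] that S by auto
  qed
  have F2: "F S' \<le> 1"
  proof -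
    have "m S' \<le> (\<Sum>k\<in>{S'..<S}. m k)" using S by (intro member_le_sum) auto
    then have "real (m S') / T S' \<le> 1" using Tpos[of S'] S by (auto simp: T_def divide_le_eq)
    then have "(real (m S') / T S') ^ d S' \<le> 1" using Tpos[of S'] S by (intro power_le_one) auto
    then show ?thesis using Fb[of S'] S by auto
  qed
  have "(\<Prod>j<S. F j) = (\<Prod>j<S'. F j) * F S'" using S by simp
  also have "\<dots> \<le> (\<Prod>j<S'. c ^ d j) * 1"
    using F1 F2 Fb S c by (intro mult_mono prod_mono prod_nonneg) auto
  finally show ?thesis using Rt by (simp add: power_sum)
qed

lemma Rt_rev: "Rt S (\<lambda>j. m (S - Suc j)) (\<lambda>j. d (S - Suc j)) = Rt S m d"
  unfolding Rt_def
  using prod.nat_diff_reindex[of "\<lambda>i. ffr (real (m i)) (d i)" S]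
    sum.nat_diff_reindex[of m S] sum.nat_diff_reindex[of d S]
  by simp

lemma Rt_U3:
  assumes S2: "2 \<le> S" and le: "\<forall>j<S. d j \<le> m j" and mpos: "\<forall>j<S. 0 < m j"
    and c0: "0 \<le> c" and c1: "c \<le> 1"
    and H1: "\<forall>j<S-1. real (m j) \<le> c * real (\<Sum>k\<in>{j..<S}. m k)"
    and H2: "\<forall>j<S-1. real (m (S - Suc j)) \<le> c * real (\<Sum>k\<in>{j..<S}. m (S - Suc k))"
  shows "Rt S m d \<le> sqrt c ^ (\<Sum>j<S. d j)"
proof -
  obtain S' where S: "S = Suc S'" using S2 by (cases S) auto
  define D where "D = (\<Sum>j<S. d j)"
  define A where "A = (\<Sum>j<S'. d j)"
  define B where "B = (\<Sum>j<S'. d (S - Suc j))"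
  have a: "Rt S m d \<le> c ^ A" unfolding A_def
    using S le mpos c0 H1 by (intro Rt_U2[where S'=S']) auto
  have b0: "Rt S (\<lambda>j. m (S - Suc j)) (\<lambda>j. d (S - Suc j)) \<le> c ^ B" unfolding B_def
    by (rule Rt_U2[where S'=S']) (use S le mpos c0 H2 in auto)
  have b: "Rt S m d \<le> c ^ B" using b0 by (simp only: Rt_rev)
  have AD: "A + d S' = D" unfolding A_def D_def S by simp
  have BD: "B + d 0 = D"
  proof -
    have "D = (\<Sum>j<S. d (S - Suc j))" unfolding D_def by (simp add: sum.nat_diff_reindex)
    also have "\<dots> = B + d 0" unfolding B_def S by simp
    finally show ?thesis by simp
  qed
  have two: "d 0 + d S' \<le> D"
  proof -
    have "(\<Sum>j\<in>{0, S'}. d j) \<le> D" unfolding D_def using S S2 by (intro sum_mono2) auto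
    then show ?thesis using S S2 by simp
  qed
  have nn: "0 \<le> Rt S m d" unfolding Rt_def using le
    apply (intro divide_nonneg_nonneg prod_nonneg ffr_pos[THEN less_imp_le])
    apply auto
    by (intro sum_mono) auto
  have "(Rt S m d)\<^sup>2 \<le> c ^ A * c ^ B" unfolding power2_eq_square
    using a b nn c0 by (intro mult_mono) auto
  also have "\<dots> = c ^ (A + B)" by (simp add: power_add)
  also have "\<dots> \<le> c ^ D" using AD BD two c0 c1 by (intro power_decreasing) auto
  also have "\<dots> = (sqrt c ^ D)\<^sup>2"
  proof -
    have "(sqrt c ^ D)\<^sup>2 = sqrt c ^ (D * 2)" by (rule power_mult[symmetric])
    also have "\<dots> = (sqrt c ^ 2) ^ D" by (subst mult.commute) (rule power_mult)
    also have "\<dots> = c ^ D" using c0 by simp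
    finally show ?thesis by simp
  qed
  finally have sq: "(Rt S m d)\<^sup>2 \<le> (sqrt c ^ D)\<^sup>2" .
  have "0 \<le> sqrt c ^ D" by (rule zero_le_power[OF real_sqrt_ge_zero[OF c0]])
  then have "Rt S m d \<le> sqrt c ^ D" by (rule power2_le_imp_le[OF sq])
  then show ?thesis unfolding D_def .
qed

lemma geo_id: "(\<Sum>x\<in>{1..N}. (q::real) ^ x) * (1 - q) = q - q ^ Suc N"
proof (induction N)
  case 0 then show ?case by simp
next
  case (Suc N)
  have "(\<Sum>x\<in>{1..Suc N}. q ^ x) = (\<Sum>x\<in>{1..N}. q ^ x) + q ^ Suc N" by simp
  then have "(\<Sum>x\<in>{1..Suc N}. q ^ x) * (1 - q) = (\<Sum>x\<in>{1..N}. q ^ x) * (1 - q) + q ^ Suc N * (1 - q)"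
    by (simp only: distrib_right)
  also have "\<dots> = q - q ^ Suc N + q ^ Suc N * (1 - q)" using Suc by simp
  also have "\<dots> = q - q ^ Suc (Suc N)" by (simp add: algebra_simps)
  finally show ?case .
qed

lemma geo_le: "0 \<le> (q::real) \<Longrightarrow> q < 1 \<Longrightarrow> (\<Sum>x\<in>{1..N}. q ^ x) \<le> q / (1 - q)"
  using geo_id[where q=q and N=N] by (simp add: le_divide_eq)

lemma geo_closed: "(q::real) \<noteq> 1 \<Longrightarrow> (\<Sum>x\<in>{1..N}. q ^ x) = (q - q ^ Suc N) / (1 - q)"
  using geo_id[where q=q and N=N] by (simp add: eq_divide_eq)

lemma Rt_L:
  assumes d: "\<forall>j<S. 1 \<le> d j \<and> d j \<le> K" and K: "\<forall>j<S. K \<le> m j" and M0: "0 < (\<Sum>j<S. m j)"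
  shows "(\<Prod>j<S. ((real (m j) - real K) / real (\<Sum>j<S. m j)) ^ d j) \<le> Rt S m d"
proof -
  define M where "M = (\<Sum>j<S. m j)"
  define D where "D = (\<Sum>j<S. d j)"
  have DM: "D \<le> M" unfolding D_def M_def using d K by (intro sum_mono) (auto intro: order.trans)
  have dm: "\<forall>j<S. d j \<le> m j" using d K le_trans by blast
  have y: "(\<Prod>j<S. (real (m j) - real K) ^ d j) \<le> (\<Prod>j<S. ffr (real (m j)) (d j))"
    using d K dm by (intro prod_mono conjI ffr_ge_pow zero_le_power) auto
  have w: "0 < ffr (real M) D" using DM by (intro ffr_pos) auto
  have z: "ffr (real M) D \<le> real M ^ D" using DM by (intro ffr_le_pow) auto
  have "(\<Prod>j<S. (real (m j) - real K) ^ d j) / real M ^ D \<le> Rt S m d"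
    unfolding Rt_def M_def[symmetric] D_def[symmetric]
    by (rule frac_le[OF _ y w z]) (use dm in \<open>auto intro!: prod_nonneg ffr_pos[THEN less_imp_le]\<close>)
  moreover have "(\<Prod>j<S. (real (m j) - real K) ^ d j) / real M ^ D = (\<Prod>j<S. ((real (m j) - real K) / real M) ^ d j)"
    unfolding D_def power_sum by (simp add: power_divide prod_dividef)
  ultimately show ?thesis unfolding M_def by simp
qed

lemma T_lower:
  assumes K: "\<forall>j<S. K \<le> m j" and M0: "0 < (\<Sum>j<S. m j)"
  shows "(\<Prod>j<S. \<Sum>x\<in>{1..K}. ((real (m j) - real K) / real (\<Sum>j<S. m j)) ^ x) \<le> (\<Sum>d\<in>box S m. Rt S m d)"
proof -
  define a where "a j = (real (m j) - real K) / real (\<Sum>j<S. m j)" for j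
  have "(\<Prod>j<S. \<Sum>x\<in>{1..K}. a j ^ x) = (\<Sum>d\<in>PiE {..<S} (\<lambda>_. {1..K}). \<Prod>j<S. a j ^ d j)"
    by (rule prod_sum_PiE) auto
  also have "\<dots> \<le> (\<Sum>d\<in>PiE {..<S} (\<lambda>_. {1..K}). Rt S m d)"
    unfolding a_def using K M0 by (intro sum_mono Rt_L) (auto simp: PiE_iff)
  also have "\<dots> \<le> (\<Sum>d\<in>box S m. Rt S m d)"
  proof -
    have sub: "PiE {..<S} (\<lambda>_. {1..K}) \<subseteq> PiE {..<S} (\<lambda>j. {1..m j})"
      using K by (intro PiE_mono) (auto intro: le_trans)
    show ?thesis unfolding box_def
      by (intro sum_mono2[OF finite_PiE sub] Rt_nonneg[unfolded box_def]) auto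
  qed
  finally show ?thesis unfolding a_def .
qed

lemma T_upper:
  assumes M0: "0 < (\<Sum>j<S. m j)" and dl: "0 \<le> \<delta>" "\<delta> < 1"
    and q: "\<forall>j<S. 0 \<le> q j \<and> q j < 1"
    and mq: "\<forall>j<S. real (m j) \<le> q j * ((1 - \<delta>) * real (\<Sum>j<S. m j))"
    and eta: "0 < \<eta>" "\<eta> < 1"
    and RB: "\<forall>d\<in>box S m. Rt S m d \<le> (\<eta>\<^sup>2) ^ (\<Sum>j<S. d j)"
  shows "(\<Sum>d\<in>box S m. Rt S m d) \<le> (\<Prod>j<S. q j / (1 - q j)) + \<eta> powr (\<delta> * real (\<Sum>j<S. m j)) * (\<eta> / (1 - \<eta>)) ^ S"
proof -
  define M where "M = (\<Sum>j<S. m j)"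
  define E where "E = \<eta> powr (\<delta> * real M)"
  have E0: "0 \<le> E" unfolding E_def by simp
  have Mpos: "0 < real M" using M0 unfolding M_def by (metis of_nat_0_less_iff)
  have pw: "Rt S m d \<le> (\<Prod>j<S. q j ^ d j) + E * (\<Prod>j<S. \<eta> ^ d j)" if d: "d \<in> box S m" for d
  proof -
    define D where "D = (\<Sum>j<S. d j)"
    have le: "\<forall>j<S. d j \<le> m j" using box_le[OF d] by auto
    have f1: "0 \<le> (\<Prod>j<S. q j ^ d j)" using q by (intro prod_nonneg) auto
    have f2: "0 \<le> E * (\<Prod>j<S. \<eta> ^ d j)" using E0 eta by (intro mult_nonneg_nonneg prod_nonneg) auto
    show ?thesis
    proof (cases "real D \<le> \<delta> * real M")
      case True
      have gap: "(1 - \<delta>) * real M \<le> real M - real D" using True by (simp add: algebra_simps)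
      have gpos: "0 < (1 - \<delta>) * real M" using dl Mpos by simp
      have DM: "D < M" using gap gpos by linarith
      have "Rt S m d \<le> (\<Prod>j<S. (real (m j) / (real M - real D)) ^ d j)"
        using Rt_U1[OF le DM[unfolded M_def D_def]] unfolding M_def D_def .
      also have "\<dots> \<le> (\<Prod>j<S. q j ^ d j)"
      proof (intro prod_mono conjI power_mono zero_le_power)
        fix j assume "j \<in> {..<S}"
        then have j: "j < S" by simp
        show "0 \<le> real (m j) / (real M - real D)" using gap gpos by simp
        show "0 \<le> real (m j) / (real M - real D)" using gap gpos by simp
        have "real (m j) / (real M - real D) \<le> real (m j) / ((1 - \<delta>) * real M)"
          using gap gpos by (intro divide_left_mono) auto
        also have "\<dots> \<le> q j" using mq j gpos unfolding M_def by (simp add: divide_le_eq)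
        finally show "real (m j) / (real M - real D) \<le> q j" .
      qed
      finally show ?thesis using f2 by linarith
    next
      case False
      have "Rt S m d \<le> (\<eta>\<^sup>2) ^ D" using RB d unfolding D_def by blast
      also have "\<dots> = \<eta> ^ D * \<eta> ^ D" by (simp add: power2_eq_square power_mult_distrib)
      also have "\<dots> \<le> E * \<eta> ^ D"
      proof (rule mult_right_mono)
        have "\<eta> ^ D = \<eta> powr real D" using eta by (simp add: powr_realpow)
        also have "\<dots> \<le> E" unfolding E_def using False eta by (intro powr_mono') auto
        finally show "\<eta> ^ D \<le> E" .
      qed (use eta in simp)
      also have "\<dots> = E * (\<Prod>j<S. \<eta> ^ d j)" unfolding D_def by (simp add: power_sum)
      finally show ?thesis using f1 by linarith
    qed
  qed
  have "(\<Sum>d\<in>box S m. Rt S m d) \<le> (\<Sum>d\<in>box S m. (\<Prod>j<S. q j ^ d j) + E * (\<Prod>j<S. \<eta> ^ d j))"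
    by (intro sum_mono pw)
  also have "\<dots> = (\<Sum>d\<in>box S m. \<Prod>j<S. q j ^ d j) + E * (\<Sum>d\<in>box S m. \<Prod>j<S. \<eta> ^ d j)"
    by (simp add: sum.distrib sum_distrib_left)
  also have "(\<Sum>d\<in>box S m. \<Prod>j<S. q j ^ d j) = (\<Prod>j<S. \<Sum>x\<in>{1..m j}. q j ^ x)"
    unfolding box_def by (rule prod_sum_PiE[symmetric]) auto
  also have "(\<Sum>d\<in>box S m. \<Prod>j<S. \<eta> ^ d j) = (\<Prod>j<S. \<Sum>x\<in>{1..m j}. \<eta> ^ x)"
    unfolding box_def by (rule prod_sum_PiE[symmetric]) auto
  also have "(\<Prod>j<S. \<Sum>x\<in>{1..m j}. q j ^ x) \<le> (\<Prod>j<S. q j / (1 - q j))"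
    using q by (intro prod_mono conjI geo_le sum_nonneg) auto
  also have "(\<Prod>j<S. \<Sum>x\<in>{1..m j}. \<eta> ^ x) \<le> (\<Prod>j<S. \<eta> / (1 - \<eta>))"
    using eta by (intro prod_mono conjI geo_le sum_nonneg) auto
  finally show ?thesis unfolding E_def M_def using E0 by (simp add: mult_left_mono)
qed

lemma pair_le_sum:
  fixes f :: "nat \<Rightarrow> real"
  assumes "finite I" "i \<in> I" "j \<in> I" "i \<noteq> j" "\<forall>k\<in>I. 0 \<le> f k"
  shows "f i + f j \<le> sum f I"
proof -
  have "sum f {i, j} \<le> sum f I" using assms by (intro sum_mono2) auto
  then show ?thesis using assms by simp
qed

lemma c_bound:
  fixes x a A T :: real
  assumes "0 < a" "x \<le> A" "x + a \<le> T" "0 \<le> x" "0 < A"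
  shows "x \<le> A / (A + a) * T"
proof -
  have "x * (A + a) \<le> A * (x + a)" using assms by (simp add: algebra_simps)
  then have "x \<le> A / (A + a) * (x + a)" using assms by (simp add: field_simps)
  also have "\<dots> \<le> A / (A + a) * T" using assms by (intro mult_left_mono) auto
  finally show ?thesis .
qed

lemma geo_lim: "0 \<le> (p::real) \<Longrightarrow> p < 1 \<Longrightarrow> (\<lambda>K. \<Sum>x\<in>{1..K}. p ^ x) \<longlonglongrightarrow> p / (1 - p)"
proof -
  assume p: "0 \<le> p" "p < 1"
  have e: "(\<Sum>x\<in>{1..K}. p ^ x) = (p - p * p ^ K) / (1 - p)" for K
    using geo_closed[where q=p and N=K] p by simp
  have "(\<lambda>K. (p - p * p ^ K) / (1 - p)) \<longlonglongrightarrow> (p - p * 0) / (1 - p)"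
    using p by (intro tendsto_intros LIMSEQ_power_zero) auto
  then show ?thesis unfolding e by simp
qed

lemma qC_aux: "0 < (B::real) \<Longrightarrow> x < B \<Longrightarrow> (x / B) / (1 - x / B) = x / (B - x)"
proof -
  assume a: "0 < B" "x < B"
  have "1 - x / B = (B - x) / B" using a by (simp add: field_simps)
  then show ?thesis using a by simp
qed

lemma main_asym:
  fixes S :: nat and \<alpha> :: "nat \<Rightarrow> real" and \<epsilon> :: real
  assumes S2: "2 \<le> S" and apos: "\<forall>j<S. 0 < \<alpha> j" and eps: "0 < \<epsilon>"
  shows "\<exists>N. \<forall>n m. n \<ge> N \<and> (\<forall>j<S. 0 < m j \<and> real (m j) = \<alpha> j * n) \<longrightarrow>
     (\<Prod>j<S. \<alpha> j / ((\<Sum>j<S. \<alpha> j) - \<alpha> j)) * (1 - \<epsilon>) < (\<Sum>d\<in>box S m. Rt S m d) \<and>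
     (\<Sum>d\<in>box S m. Rt S m d) < (\<Prod>j<S. \<alpha> j / ((\<Sum>j<S. \<alpha> j) - \<alpha> j)) * (1 + \<epsilon>)"
proof -
  define A where "A = (\<Sum>j<S. \<alpha> j)"
  define C where "C = (\<Prod>j<S. \<alpha> j / (A - \<alpha> j))"
  have anonneg: "\<forall>k\<in>{..<S}. 0 \<le> \<alpha> k" using apos by auto
  have gapA: "\<alpha> j < A - 0" if j: "j < S" for j
  proof -
    define i :: nat where "i = (if j = 0 then 1 else 0)"
    have "i < S" "i \<noteq> j" unfolding i_def using S2 j by auto
    then have "\<alpha> j + \<alpha> i \<le> A" unfolding A_def using j anonneg by (intro pair_le_sum) auto
    moreover have "0 < \<alpha> i" using apos \<open>i < S\<close> by auto
    ultimately show ?thesis by simp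
  qed
  have Apos: "0 < A" using gapA[of 0] apos S2 by force
  have Cpos: "0 < C" unfolding C_def using apos gapA by (intro prod_pos) auto
  define p where "p j = \<alpha> j / A" for j
  have p01: "0 \<le> p j" "p j < 1" if "j < S" for j
    using apos gapA[OF that] Apos that unfolding p_def by (auto simp: divide_less_eq)
  have pC: "p j / (1 - p j) = \<alpha> j / (A - \<alpha> j)" if "j < S" for j
    using Apos gapA[OF that] unfolding p_def by (simp add: field_simps)
  have lim1: "(\<lambda>K. \<Prod>j<S. \<Sum>x\<in>{1..K}. p j ^ x) \<longlonglongrightarrow> C"
  proof -
    have "(\<lambda>K. \<Prod>j<S. \<Sum>x\<in>{1..K}. p j ^ x) \<longlonglongrightarrow> (\<Prod>j<S. p j / (1 - p j))"
      using p01 by (intro tendsto_prod geo_lim) auto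
    also have "(\<Prod>j<S. p j / (1 - p j)) = C" unfolding C_def using pC by (intro prod.cong) auto
    finally show ?thesis .
  qed
  have "C * (1 - \<epsilon>) < C" using Cpos eps by simp
  from order_tendstoD(1)[OF lim1 this] obtain K where
    GK: "C * (1 - \<epsilon>) < (\<Prod>j<S. \<Sum>x\<in>{1..K}. p j ^ x)"
    by (auto simp: eventually_sequentially)
  define Lo where "Lo n = (\<Prod>j<S. \<Sum>x\<in>{1..K}. (\<alpha> j / A - real K / A * inverse n) ^ x)" for n :: real
  have lim2: "(Lo \<longlongrightarrow> (\<Prod>j<S. \<Sum>x\<in>{1..K}. p j ^ x)) at_top"
  proof -
    have "((\<lambda>n::real. \<alpha> j / A - real K / A * inverse n) \<longlongrightarrow> \<alpha> j / A - real K / A * 0) at_top" for j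
      by (intro tendsto_intros tendsto_inverse_0_at_top filterlim_ident)
    then have "((\<lambda>n::real. \<alpha> j / A - real K / A * inverse n) \<longlongrightarrow> p j) at_top" for j
      unfolding p_def by simp
    then show ?thesis unfolding Lo_def by (intro tendsto_prod tendsto_sum tendsto_power) auto
  qed
  have ev_lo: "eventually (\<lambda>n. C * (1 - \<epsilon>) < Lo n) at_top"
    using order_tendstoD(1)[OF lim2 GK] .
  have ev_K: "eventually (\<lambda>n. \<forall>j\<in>{..<S}. real K \<le> \<alpha> j * n) at_top"
  proof (intro eventually_ball_finite ballI)
    fix j assume "j \<in> {..<S}"
    then have aj: "0 < \<alpha> j" using apos by auto
    show "eventually (\<lambda>n. real K \<le> \<alpha> j * n) at_top"
      using eventually_ge_at_top[of "real K / \<alpha> j"]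
      by eventually_elim (use aj in \<open>simp add: divide_le_eq mult.commute\<close>)
  qed auto
  define dk where "dk k = inverse (real (Suc k)) / 2" for k
  have dk0: "dk \<longlonglongrightarrow> 0"
    unfolding dk_def using tendsto_divide[OF LIMSEQ_inverse_real_of_nat tendsto_const, of 2] by simp
  have ev_gap: "eventually (\<lambda>k. \<forall>j\<in>{..<S}. 0 < (1 - dk k) * A - \<alpha> j) sequentially"
  proof (intro eventually_ball_finite ballI)
    fix j assume j: "j \<in> {..<S}"
    have "(\<lambda>k. (1 - dk k) * A - \<alpha> j) \<longlonglongrightarrow> (1 - 0) * A - \<alpha> j"
      by (intro tendsto_intros dk0)
    moreover have "0 < (1 - 0) * A - \<alpha> j" using gapA j by simp
    ultimately show "eventually (\<lambda>k. 0 < (1 - dk k) * A - \<alpha> j) sequentially"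
      by (rule order_tendstoD(1))
  qed auto
  have limf: "(\<lambda>k. \<Prod>j<S. \<alpha> j / ((1 - dk k) * A - \<alpha> j)) \<longlonglongrightarrow> (\<Prod>j<S. \<alpha> j / ((1 - 0) * A - \<alpha> j))"
    using gapA by (intro tendsto_intros dk0) auto
  have "C < C * (1 + \<epsilon> / 2)" using Cpos eps by simp
  then have ev_f: "eventually (\<lambda>k. (\<Prod>j<S. \<alpha> j / ((1 - dk k) * A - \<alpha> j)) < C * (1 + \<epsilon> / 2)) sequentially"
    using order_tendstoD(2)[OF limf] unfolding C_def by simp
  obtain k0 where k0: "\<forall>j\<in>{..<S}. 0 < (1 - dk k0) * A - \<alpha> j"
      "(\<Prod>j<S. \<alpha> j / ((1 - dk k0) * A - \<alpha> j)) < C * (1 + \<epsilon> / 2)"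
    using eventually_conj[OF ev_gap ev_f] by (auto simp: eventually_sequentially)
  define \<delta> where "\<delta> = dk k0"
  have d01: "0 < \<delta>" "\<delta> < 1" unfolding \<delta>_def dk_def by (auto simp: field_simps)
  define q where "q j = \<alpha> j / ((1 - \<delta>) * A)" for j
  have dApos: "0 < (1 - \<delta>) * A" using d01 Apos by simp
  have q01: "0 \<le> q j \<and> q j < 1" if "j < S" for j
    using k0(1) that apos dApos unfolding q_def \<delta>_def by (auto simp: divide_less_eq)
  have qC: "q j / (1 - q j) = \<alpha> j / ((1 - \<delta>) * A - \<alpha> j)" if "j < S" for j
    using k0(1) that dApos unfolding q_def \<delta>_def by (intro qC_aux) auto
  have Uq: "(\<Prod>j<S. q j / (1 - q j)) < C * (1 + \<epsilon> / 2)"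
  proof -
    have "(\<Prod>j<S. q j / (1 - q j)) = (\<Prod>j<S. \<alpha> j / ((1 - dk k0) * A - \<alpha> j))"
      using qC unfolding \<delta>_def by (intro prod.cong) auto
    then show ?thesis using k0(2) by simp
  qed
  define a where "a = min (\<alpha> 0) (\<alpha> (S - 1))"
  have apos': "0 < a" unfolding a_def using apos S2 by auto
  define c where "c = A / (A + a)"
  have c01: "0 < c" "c < 1" unfolding c_def using Apos apos' by auto
  define \<eta> where "\<eta> = sqrt (sqrt c)"
  have eta01: "0 < \<eta>" "\<eta> < 1" unfolding \<eta>_def using c01 by auto
  have eta2: "\<eta>\<^sup>2 = sqrt c" unfolding \<eta>_def using c01 by simp
  have lim3: "((\<lambda>n. \<eta> powr (\<delta> * (A * n)) * (\<eta> / (1 - \<eta>)) ^ S) \<longlongrightarrow> 0 * (\<eta> / (1 - \<eta>)) ^ S) at_top"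
  proof (intro tendsto_intros)
    have neg: "\<delta> * A * ln \<eta> < 0" using d01 Apos eta01 by (simp add: mult_pos_neg)
    have "((\<lambda>n. exp (\<delta> * A * ln \<eta> * n)) \<longlongrightarrow> 0) at_top"
      by (rule filterlim_compose[OF exp_at_bot filterlim_tendsto_neg_mult_at_bot[OF tendsto_const neg filterlim_ident]])
    moreover have "\<eta> powr (\<delta> * (A * n)) = exp (\<delta> * A * ln \<eta> * n)" for n
      using eta01 by (simp add: powr_def algebra_simps)
    ultimately show "((\<lambda>n. \<eta> powr (\<delta> * (A * n))) \<longlongrightarrow> 0) at_top" by simp
  qed
  have "0 * (\<eta> / (1 - \<eta>)) ^ S < C * \<epsilon> / 2" using Cpos eps by simp
  from order_tendstoD(2)[OF lim3 this]
  have ev_tail: "eventually (\<lambda>n. \<eta> powr (\<delta> * (A * n)) * (\<eta> / (1 - \<eta>)) ^ S < C * \<epsilon> / 2) at_top" .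
  have H1a: "\<alpha> j \<le> c * (\<Sum>k\<in>{j..<S}. \<alpha> k)" if j: "j < S - 1" for j
  proof -
    have "\<alpha> j + \<alpha> (S - 1) \<le> (\<Sum>k\<in>{j..<S}. \<alpha> k)"
      using j apos by (intro pair_le_sum) auto
    then have "\<alpha> j + a \<le> (\<Sum>k\<in>{j..<S}. \<alpha> k)" unfolding a_def by linarith
    moreover have "\<alpha> j \<le> A" unfolding A_def using j anonneg by (intro member_le_sum) auto
    moreover have "0 \<le> \<alpha> j" using apos j by (metis diff_le_self less_le_trans less_imp_le order.refl)
    ultimately show ?thesis unfolding c_def using apos' Apos by (intro c_bound) auto
  qed
  have anon2: "0 \<le> \<alpha> (S - Suc k)" for k
  proof -
    have "S - Suc k < S" using S2 by simp
    then show ?thesis using apos by (simp add: less_imp_le)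
  qed
  have H2a: "\<alpha> (S - Suc j) \<le> c * (\<Sum>k\<in>{j..<S}. \<alpha> (S - Suc k))" if j: "j < S - 1" for j
  proof -
    have "\<alpha> (S - Suc j) + \<alpha> (S - Suc (S - 1)) \<le> (\<Sum>k\<in>{j..<S}. \<alpha> (S - Suc k))"
      using j anon2 by (intro pair_le_sum[where f="\<lambda>k. \<alpha> (S - Suc k)"]) auto
    then have "\<alpha> (S - Suc j) + a \<le> (\<Sum>k\<in>{j..<S}. \<alpha> (S - Suc k))" unfolding a_def using S2 by simp
    moreover have "\<alpha> (S - Suc j) \<le> A" unfolding A_def using j anonneg by (intro member_le_sum) auto
    moreover have "0 \<le> \<alpha> (S - Suc j)" by (rule anon2)
    ultimately show ?thesis unfolding c_def using apos' Apos by (intro c_bound) auto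
  qed
  have "eventually (\<lambda>n. 0 < n \<and> (\<forall>j\<in>{..<S}. real K \<le> \<alpha> j * n) \<and> C * (1 - \<epsilon>) < Lo n \<and>
           \<eta> powr (\<delta> * (A * n)) * (\<eta> / (1 - \<eta>)) ^ S < C * \<epsilon> / 2) at_top"
    using eventually_gt_at_top[of 0] ev_K ev_lo ev_tail by eventually_elim auto
  then obtain N where NN: "\<And>n. n \<ge> N \<Longrightarrow> 0 < n \<and> (\<forall>j\<in>{..<S}. real K \<le> \<alpha> j * n) \<and> C * (1 - \<epsilon>) < Lo n \<and>
           \<eta> powr (\<delta> * (A * n)) * (\<eta> / (1 - \<eta>)) ^ S < C * \<epsilon> / 2"
    by (auto simp: eventually_at_top_linorder)
  show ?thesis unfolding A_def[symmetric] C_def[symmetric]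
  proof (intro exI allI impI)
    fix n m assume asm: "n \<ge> N \<and> (\<forall>j<S. 0 < m j \<and> real (m j) = \<alpha> j * n)"
    then have nN: "n \<ge> N" and mm: "\<forall>j<S. 0 < m j \<and> real (m j) = \<alpha> j * n" by auto
    note P = NN[OF nN]
    have npos: "0 < n" using P by auto
    have rM: "real (\<Sum>j<S. m j) = A * n"
      unfolding A_def using mm by (simp add: sum_distrib_right)
    have M0: "0 < (\<Sum>j<S. m j)" using rM Apos npos by (metis of_nat_0_less_iff mult_pos_pos)
    define T where "T = (\<Sum>d\<in>box S m. Rt S m d)"
    have Km: "\<forall>j<S. K \<le> m j" using P mm by (metis lessThan_iff of_nat_le_iff)
    have "(\<Prod>j<S. \<Sum>x\<in>{1..K}. ((real (m j) - real K) / real (\<Sum>j<S. m j)) ^ x) \<le> T"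
      unfolding T_def using T_lower[OF Km M0] .
    moreover have "(\<Prod>j<S. \<Sum>x\<in>{1..K}. ((real (m j) - real K) / real (\<Sum>j<S. m j)) ^ x) = Lo n"
      unfolding Lo_def rM
    proof (intro prod.cong refl sum.cong)
      fix j x assume "j \<in> {..<S}"
      then have "real (m j) = \<alpha> j * n" using mm by auto
      then show "((real (m j) - real K) / (A * n)) ^ x = (\<alpha> j / A - real K / A * inverse n) ^ x"
        using npos Apos by (simp add: field_simps)
    qed
    ultimately have lowT: "C * (1 - \<epsilon>) < T" using P by linarith
    have mq: "\<forall>j<S. real (m j) \<le> q j * ((1 - \<delta>) * real (\<Sum>j<S. m j))"
      using mm dApos unfolding rM q_def by (auto simp: field_simps)
    have le_c: "\<forall>d\<in>box S m. Rt S m d \<le> (\<eta>\<^sup>2) ^ (\<Sum>j<S. d j)"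
    proof
      fix d assume d: "d \<in> box S m"
      have H1: "\<forall>j<S-1. real (m j) \<le> c * real (\<Sum>k\<in>{j..<S}. m k)"
      proof (intro allI impI)
        fix j assume j: "j < S - 1"
        have "real (\<Sum>k\<in>{j..<S}. m k) = (\<Sum>k\<in>{j..<S}. \<alpha> k) * n"
          using mm by (simp add: sum_distrib_right)
        then show "real (m j) \<le> c * real (\<Sum>k\<in>{j..<S}. m k)"
          using H1a[OF j] mm j npos by (simp add: mult_right_mono)
      qed
      have H2: "\<forall>j<S-1. real (m (S - Suc j)) \<le> c * real (\<Sum>k\<in>{j..<S}. m (S - Suc k))"
      proof (intro allI impI)
        fix j assume j: "j < S - 1"
        have "real (\<Sum>k\<in>{j..<S}. m (S - Suc k)) = (\<Sum>k\<in>{j..<S}. \<alpha> (S - Suc k)) * n"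
          using mm by (simp add: sum_distrib_right)
        then show "real (m (S - Suc j)) \<le> c * real (\<Sum>k\<in>{j..<S}. m (S - Suc k))"
          using H2a[OF j] mm j npos by (simp add: mult_right_mono)
      qed
      have "Rt S m d \<le> sqrt c ^ (\<Sum>j<S. d j)"
        using box_le[OF d] mm c01 H1 H2 S2 by (intro Rt_U3) auto
      then show "Rt S m d \<le> (\<eta>\<^sup>2) ^ (\<Sum>j<S. d j)" unfolding eta2 .
    qed
    have "T \<le> (\<Prod>j<S. q j / (1 - q j)) + \<eta> powr (\<delta> * real (\<Sum>j<S. m j)) * (\<eta> / (1 - \<eta>)) ^ S"
      unfolding T_def using d01 q01 eta01 le_c mq M0 by (intro T_upper) auto
    then have upT: "T < C * (1 + \<epsilon>)" using Uq P unfolding rM by (simp add: algebra_simps)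
    show "C * (1 - \<epsilon>) < T \<and> T < C * (1 + \<epsilon>)" using lowT upT by auto
  qed
qed

theorem mainTheorem16:
  fixes S :: nat and \<alpha> :: "nat \<Rightarrow> real"
  assumes "S \<ge> 2" and "\<forall>j<S. \<alpha> j > 0"
  shows "\<forall>\<epsilon>>0. \<exists>N. \<forall>(n::real) (m::nat \<Rightarrow> nat).
           n \<ge> N \<and> (\<forall>j<S. m j > 0 \<and> real (m j) = \<alpha> j * n) \<longrightarrow>
           \<bar>blockB S m /
              ((\<Prod>j<S. real (m j)) / (\<Prod>j<S. real ((\<Sum>i<S. m i) - m j))
                * fact (\<Sum>i<S. m i) / (\<Prod>j<S. fact (m j))) - 1\<bar> < \<epsilon>"
proof (intro allI impI)
  fix \<epsilon> :: real assume eps: "0 < \<epsilon>"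
  define A where "A = (\<Sum>j<S. \<alpha> j)"
  define C where "C = (\<Prod>j<S. \<alpha> j / (A - \<alpha> j))"
  obtain N where NN: "\<And>n m. n \<ge> N \<and> (\<forall>j<S. 0 < m j \<and> real (m j) = \<alpha> j * n) \<Longrightarrow>
     C * (1 - \<epsilon>) < (\<Sum>d\<in>box S m. Rt S m d) \<and> (\<Sum>d\<in>box S m. Rt S m d) < C * (1 + \<epsilon>)"
    using main_asym[OF assms eps] unfolding A_def C_def by blast
  show "\<exists>N. \<forall>(n::real) (m::nat \<Rightarrow> nat).
           n \<ge> N \<and> (\<forall>j<S. m j > 0 \<and> real (m j) = \<alpha> j * n) \<longrightarrow>
           \<bar>blockB S m /
              ((\<Prod>j<S. real (m j)) / (\<Prod>j<S. real ((\<Sum>i<S. m i) - m j))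
                * fact (\<Sum>i<S. m i) / (\<Prod>j<S. fact (m j))) - 1\<bar> < \<epsilon>"
  proof (intro exI allI impI)
    fix n :: real and m :: "nat \<Rightarrow> nat"
    assume asm: "n \<ge> N \<and> (\<forall>j<S. m j > 0 \<and> real (m j) = \<alpha> j * n)"
    then have mm: "\<forall>j<S. 0 < m j \<and> real (m j) = \<alpha> j * n" by auto
    define T where "T = (\<Sum>d\<in>box S m. Rt S m d)"
    have TT: "C * (1 - \<epsilon>) < T" "T < C * (1 + \<epsilon>)" using NN[OF asm] unfolding T_def by auto
    have Cpos: "0 < C" using TT eps by (smt (verit) mult_less_cancel_left)
    have S0: "0 < S" using assms by simp
    have npos: "0 < n"
    proof -
      have "0 < real (m 0)" using mm S0 by auto
      then have "0 < \<alpha> 0 * n" using mm S0 by auto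
      moreover have "0 < \<alpha> 0" using assms S0 by auto
      ultimately show ?thesis by (simp add: zero_less_mult_iff)
    qed
    define M where "M = (\<Sum>i<S. m i)"
    have rM: "real M = A * n" unfolding M_def A_def using mm by (simp add: sum_distrib_right)
    define F :: real where "F = fact M / (\<Prod>j<S. fact (m j))"
    have Fpos: "0 < F" unfolding F_def by (intro divide_pos_pos prod_pos) auto
    have ratio: "(\<Prod>j<S. real (m j)) / (\<Prod>j<S. real (M - m j)) = C"
    proof -
      have "(\<Prod>j<S. real (m j)) / (\<Prod>j<S. real (M - m j)) = (\<Prod>j<S. real (m j) / real (M - m j))"
        by (simp add: prod_dividef)
      also have "\<dots> = C" unfolding C_def
      proof (intro prod.cong refl)
        fix j assume "j \<in> {..<S}"
        then have j: "j < S" by simp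
        have "m j \<le> M" unfolding M_def using j by (intro member_le_sum) auto
        then have "real (M - m j) = (A - \<alpha> j) * n" using rM mm j by (simp add: of_nat_diff algebra_simps)
        then show "real (m j) / real (M - m j) = \<alpha> j / (A - \<alpha> j)" using mm j npos by simp
      qed
      finally show ?thesis .
    qed
    have "blockB S m = F * T" unfolding F_def T_def M_def by (rule blockB_eq)
    moreover have "(\<Prod>j<S. real (m j)) / (\<Prod>j<S. real (M - m j)) * fact M / (\<Prod>j<S. fact (m j)) = C * F"
      unfolding ratio F_def by simp
    ultimately have "blockB S m / ((\<Prod>j<S. real (m j)) / (\<Prod>j<S. real (M - m j)) * fact M / (\<Prod>j<S. fact (m j))) = T / C"
      using Fpos Cpos by simp
    moreover have "\<bar>T / C - 1\<bar> < \<epsilon>"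
    proof -
      have "T / C < 1 + \<epsilon>" using TT Cpos by (simp add: divide_less_eq mult.commute)
      moreover have "1 - \<epsilon> < T / C" using TT Cpos by (simp add: less_divide_eq mult.commute)
      ultimately show ?thesis by linarith
    qed
    ultimately show "\<bar>blockB S m /
              ((\<Prod>j<S. real (m j)) / (\<Prod>j<S. real ((\<Sum>i<S. m i) - m j))
                * fact (\<Sum>i<S. m i) / (\<Prod>j<S. fact (m j))) - 1\<bar> < \<epsilon>" unfolding M_def by simp
  qed
qed

end
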